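(* Let $\boldsymbol\Theta^*\in\mathbb R^{n\times r}$ (rows $\boldsymbol\theta_i^{*T}$) and $\mathbf A^*\in\mathbb R^{p\times r}$ (rows $\mathbf a_j^{*T}$) with $\mathbf M^*=\boldsymbol\Theta^*(\mathbf A^* )^T$, let $\mathbf A\in\mathbb R^{p\times r}$ (rows $\mathbf a_j^T$), fix $i\in[n]$, and suppose $\|\boldsymbol\Theta^*\|_{2\to\infty}\le C_1$, $\|\mathbf A^*\|_{2\to\infty}\le C_2$, $\|\mathbf A\|_{2\to\infty}\le C_2$ and $\sigma_r(\mathcal I_{1,i}(\mathbf A))>0$. If there exists $\xi>0$ such that $$2\sigma_r^{-1}(\mathcal I_{1,i}(\mathbf A))\big\{\|\mathbf Z_{i\cdot}\mathrm{diag}(\boldsymbol\Omega_{i\cdot})\mathbf A\|+\|\mathbf B_{1,i}(\mathbf A)\|+\beta_{1,i}(\mathbf A)\kappa_3(C_2(C_1+\xi))\big\}\le\xi\le\frac{\sigma_r(\mathcal I_{1,i}(\mathbf A))}{2\gamma_{1,i}(\mathbf A)\kappa_3(C_2(C_1+\xi))}$$ (the right-hand side read as $+\infty$ if its denominator is $0$), then there exists $\tilde{\boldsymbol\theta}_i\in\mathbb R^r$ with $\|\tilde{\boldsymbol\theta}_i-\boldsymbol\theta_i^*\|\le\xi$ and $S_{1,i}(\tilde{\boldsymbol\theta}_i;\mathbf A)=\mathbf 0$.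
   Context: Deterministic setting: $\phi>0$; $b:\mathbb R\to\mathbb R$ is three times continuously differentiable with $b''>0$; $y_{ij}\in\mathbb R$ and $\omega_{ij}\in\{0,1\}$ are fixed numbers; $z_{ij}=y_{ij}-b'(m^*_{ij})$, $\mathbf Z_{i\cdot}=(z_{i1},\dots,z_{ip})\in\mathbb R^{1\times p}$, $\mathrm{diag}(\boldsymbol\Omega_{i\cdot})=\mathrm{diag}(\omega_{i1},\dots,\omega_{ip})$. $\kappa_3(\alpha)=\sup_{|x|\le\alpha}|b'''(x)|$. Definitions: $S_{1,i}(\boldsymbol\theta;\mathbf A)=\phi^{-1}\sum_{j=1}^p\omega_{ij}\{y_{ij}-b'(\mathbf a_j^T\boldsymbol\theta)\}\mathbf a_j$; $\mathbf B_{1,i}(\mathbf A)=\sum_{j=1}^p\omega_{ij}b''(m^*_{ij})\mathbf a_j(\mathbf a_j-\mathbf a_j^* )^T\boldsymbol\theta_i^*$; $\mathcal I_{1,i}(\mathbf A)=\sum_{j=1}^p\omega_{ij}b''(m^*_{ij})\mathbf a_j\mathbf a_j^T$; $\beta_{1,i}(\mathbf A)=\sup_{\|\mathbf u\|=1}\sum_j\omega_{ij}((\mathbf a_j-\mathbf a_j^* )^T\boldsymbol\theta_i^* )^2|\mathbf a_j^T\mathbf u|$; $\gamma_{1,i}(\mathbf A)=\sup_{\|\mathbf u\|=1}\sum_j\omega_{ij}|\mathbf a_j^T\mathbf u|^3$. $\sigma_r(\cdot)$ denotes the $r$-th largest singular value; $\|X\|_{2\to\infty}$ the maximal row Euclidean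 norm. *)

theory Defs
  imports "HOL-Analysis.Analysis"
begin

text \<open>Matrices: a matrix with rows indexed by 'm and r columns is a value of type
  real^'r^'m; row k is X $ k.\<close>

definition two_to_inf_norm :: "real^'r^'m::finite \<Rightarrow> real" where
  "two_to_inf_norm X = (MAX k\<in>UNIV. norm (X $ k))"

text \<open>r-th largest (= smallest) singular value of an r x r matrix.\<close>
definition sigma_min :: "real^'r::finite^'r \<Rightarrow> real" where
  "sigma_min M = (INF u\<in>{u::real^'r. norm u = 1}. norm (M *v u))"

definition kappa3 :: "(real \<Rightarrow> real) \<Rightarrow> real \<Rightarrow> real" where
  "kappa3 b3 \<alpha> = (SUP x\<in>{x. \<bar>x\<bar> \<le> \<alpha>}. \<bar>b3 x\<bar>)"

definition S1 :: "real \<Rightarrow> (real \<Rightarrow> real) \<Rightarrow> ('p::finite \<Rightarrow> real) \<Rightarrow> ('p \<Rightarrow> real)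
    \<Rightarrow> real^'r::finite \<Rightarrow> real^'r^'p \<Rightarrow> real^'r" where
  "S1 \<phi> b1 y \<omega> \<theta> A = (1/\<phi>) *\<^sub>R (\<Sum>j\<in>UNIV. (\<omega> j * (y j - b1 ((A $ j) \<bullet> \<theta>))) *\<^sub>R (A $ j))"

definition B1 :: "(real \<Rightarrow> real) \<Rightarrow> ('p::finite \<Rightarrow> real) \<Rightarrow> ('p \<Rightarrow> real)
    \<Rightarrow> real^'r::finite \<Rightarrow> real^'r^'p \<Rightarrow> real^'r^'p \<Rightarrow> real^'r" where
  "B1 b2 \<omega> mstar \<theta>star Astar A =
     (\<Sum>j\<in>UNIV. (\<omega> j * b2 (mstar j) * ((A $ j - Astar $ j) \<bullet> \<theta>star)) *\<^sub>R (A $ j))"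

definition I1 :: "(real \<Rightarrow> real) \<Rightarrow> ('p::finite \<Rightarrow> real) \<Rightarrow> ('p \<Rightarrow> real)
    \<Rightarrow> real^'r::finite^'p \<Rightarrow> real^'r^'r" where
  "I1 b2 \<omega> mstar A =
     (\<Sum>j\<in>UNIV. (\<omega> j * b2 (mstar j)) *\<^sub>R (\<chi> k l. (A $ j $ k) * (A $ j $ l)))"

definition beta1 :: "('p::finite \<Rightarrow> real) \<Rightarrow> real^'r::finite \<Rightarrow> real^'r^'p \<Rightarrow> real^'r^'p \<Rightarrow> real" where
  "beta1 \<omega> \<theta>star Astar A = (SUP u\<in>{u::real^'r. norm u = 1}.
     \<Sum>j\<in>UNIV. \<omega> j * ((A $ j - Astar $ j) \<bullet> \<theta>star)\<^sup>2 * \<bar>(A $ j) \<bullet> u\<bar>)"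

definition gamma1 :: "('p::finite \<Rightarrow> real) \<Rightarrow> real^'r::finite^'p \<Rightarrow> real" where
  "gamma1 \<omega> A = (SUP u\<in>{u::real^'r. norm u = 1}. \<Sum>j\<in>UNIV. \<omega> j * \<bar>(A $ j) \<bullet> u\<bar> ^ 3)"

end

theory Submission
  imports Defs
begin

lemma sigma_bound:
  fixes M :: "real^'r::finite^'r"
  shows "sigma_min M * norm v \<le> norm (M *v v)"
proof (cases "v = 0")
  case True then show ?thesis by simp
next
  case False
  let ?u = "(1 / norm v) *\<^sub>R v"
  have u1: "norm ?u = 1" using False by simp
  have "sigma_min M \<le> norm (M *v ?u)"
    unfolding sigma_min_def
    by (rule cINF_lower) (use u1 in \<open>auto intro: bdd_belowI[where m=0]\<close>)
  also have "\<dots> = norm (M *v v) / norm v"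
    by (simp add: matrix_vector_mult_scaleR)
  finally show ?thesis using False by (simp add: field_simps)
qed

lemma kappa_bound:
  assumes "continuous_on UNIV b3" "\<bar>x\<bar> \<le> a"
  shows "\<bar>b3 x\<bar> \<le> kappa3 b3 a"
proof -
  have "{x. \<bar>x\<bar> \<le> a} = {-a..a}" by auto
  have "compact ((\<lambda>x. \<bar>b3 x\<bar>) ` {-a..a})"
    by (rule compact_continuous_image) (auto intro!: continuous_intros continuous_on_subset[OF assms(1)])
  then have "bdd_above ((\<lambda>x. \<bar>b3 x\<bar>) ` {x. \<bar>x\<bar> \<le> a})"
    using \<open>{x. \<bar>x\<bar> \<le> a} = {-a..a}\<close> by (simp add: bounded_imp_bdd_above compact_imp_bounded)
  then show ?thesis unfolding kappa3_def by (rule cSUP_upper[rotated]) (use assms in auto)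
qed

lemma I1_mult:
  "I1 b2 w m A *v d = (\<Sum>j\<in>UNIV. (w j * b2 (m j) * (A $ j \<bullet> d)) *\<^sub>R A $ j)"
  unfolding I1_def
  by (simp add: vec_eq_iff matrix_vector_mult_def inner_vec_def sum_distrib_left sum_distrib_right
      algebra_simps sum_component) (subst sum.swap, simp add: sum_distrib_left algebra_simps)

lemma taylor2:
  fixes b1 b2 b3 :: "real \<Rightarrow> real"
  assumes d2: "\<And>x. (b1 has_real_derivative b2 x) (at x)"
    and d3: "\<And>x. (b2 has_real_derivative b3 x) (at x)"
    and K: "\<And>x. min m t \<le> x \<Longrightarrow> x \<le> max m t \<Longrightarrow> \<bar>b3 x\<bar> \<le> K"
  shows "\<bar>b1 t - b1 m - b2 m * (t - m)\<bar> \<le> K / 2 * (t - m)\<^sup>2"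
proof (cases "t = m")
  case True then show ?thesis by simp
next
  case False
  define diff where "diff = (\<lambda>k::nat. if k = 0 then b1 else if k = 1 then b2 else b3)"
  obtain s where s: "(if t < m then t < s \<and> s < m else m < s \<and> s < t)"
    and eq: "b1 t = (\<Sum>k<2. (diff k m / fact k) * (t - m)^k) + (diff 2 s / fact 2) * (t - m)^2"
  proof -
    have "\<forall>k ta. k < 2 \<and> min m t \<le> ta \<and> ta \<le> max m t \<longrightarrow> DERIV (diff k) ta :> diff (Suc k) ta"
      using d2 d3 by (auto simp: diff_def less_2_cases_iff)
    from Taylor[of 2 diff b1 "min m t" "max m t" m t, OF _ _ this] False
    show ?thesis using that by (auto simp: diff_def)
  qed
  have "\<bar>b3 s\<bar> \<le> K" using s by (intro K) (auto split: if_splits)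
  moreover have "b1 t - b1 m - b2 m * (t - m) = b3 s / 2 * (t - m)^2"
    using eq by (simp add: diff_def numeral_2_eq_2)
  ultimately show ?thesis
  proof -
    assume a: "\<bar>b3 s\<bar> \<le> K" and e: "b1 t - b1 m - b2 m * (t - m) = b3 s / 2 * (t - m)^2"
    have "\<bar>b3 s / 2 * (t - m)^2\<bar> = \<bar>b3 s\<bar> / 2 * (t - m)^2" by (simp add: abs_mult)
    also have "\<dots> \<le> K / 2 * (t - m)^2" using a by (intro mult_right_mono) auto
    finally show ?thesis unfolding e .
  qed
qed

lemma row_le: "norm (X $ k) \<le> two_to_inf_norm X"
  unfolding two_to_inf_norm_def by (rule Max_ge) auto

lemma beta_upper:
  fixes w :: "'p::finite \<Rightarrow> real"
  assumes "\<And>j. w j \<ge> 0" "norm (u::real^'r::finite) = 1"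
  shows "(\<Sum>j\<in>UNIV. w j * ((A $ j - Astar $ j) \<bullet> th)\<^sup>2 * \<bar>(A $ j) \<bullet> u\<bar>) \<le> beta1 w th Astar A"
  unfolding beta1_def
proof (rule cSUP_upper[rotated])
  show "bdd_above ((\<lambda>u. \<Sum>j\<in>UNIV. w j * ((A $ j - Astar $ j) \<bullet> th)\<^sup>2 * \<bar>(A $ j) \<bullet> u\<bar>) ` {u. norm u = 1})"
  proof (rule bdd_aboveI2)
    fix v :: "real^'r" assume "v \<in> {u. norm u = 1}"
    then have v: "norm v = 1" by simp
    show "(\<Sum>j\<in>UNIV. w j * ((A $ j - Astar $ j) \<bullet> th)\<^sup>2 * \<bar>(A $ j) \<bullet> v\<bar>)
       \<le> (\<Sum>j\<in>UNIV. w j * ((A $ j - Astar $ j) \<bullet> th)\<^sup>2 * norm (A $ j))"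
    proof (rule sum_mono)
      fix j
      have "\<bar>(A $ j) \<bullet> v\<bar> \<le> norm (A $ j)" using Cauchy_Schwarz_ineq2[of "A $ j" v] v by simp
      then show "w j * ((A $ j - Astar $ j) \<bullet> th)\<^sup>2 * \<bar>(A $ j) \<bullet> v\<bar> \<le> w j * ((A $ j - Astar $ j) \<bullet> th)\<^sup>2 * norm (A $ j)"
        using assms(1)[of j] by (intro mult_left_mono) auto
    qed
  qed
qed (use assms in auto)

lemma gamma_upper:
  fixes w :: "'p::finite \<Rightarrow> real"
  assumes "\<And>j. w j \<ge> 0" "norm (u::real^'r::finite) = 1"
  shows "(\<Sum>j\<in>UNIV. w j * \<bar>(A $ j) \<bullet> u\<bar> ^ 3) \<le> gamma1 w A"
  unfolding gamma1_def
proof (rule cSUP_upper[rotated])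
  show "bdd_above ((\<lambda>u. \<Sum>j\<in>UNIV. w j * \<bar>(A $ j) \<bullet> u\<bar> ^ 3) ` {u. norm u = 1})"
  proof (rule bdd_aboveI2)
    fix v :: "real^'r" assume "v \<in> {u. norm u = 1}"
    then have v: "norm v = 1" by simp
    show "(\<Sum>j\<in>UNIV. w j * \<bar>(A $ j) \<bullet> v\<bar> ^ 3) \<le> (\<Sum>j\<in>UNIV. w j * norm (A $ j) ^ 3)"
    proof (rule sum_mono)
      fix j
      have "\<bar>(A $ j) \<bullet> v\<bar> \<le> norm (A $ j)" using Cauchy_Schwarz_ineq2[of "A $ j" v] v by simp
      then have "\<bar>(A $ j) \<bullet> v\<bar> ^ 3 \<le> norm (A $ j) ^ 3" by (intro power_mono) auto
      then show "w j * \<bar>(A $ j) \<bullet> v\<bar> ^ 3 \<le> w j * norm (A $ j) ^ 3"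
        using assms(1)[of j] by (intro mult_left_mono) auto
    qed
  qed
qed (use assms in auto)

lemma gamma_nonneg:
  fixes w :: "'p::finite \<Rightarrow> real"
  assumes "\<And>j. w j \<ge> 0"
  shows "0 \<le> gamma1 w (A::real^'r::finite^'p)"
proof -
  have "0 \<le> (\<Sum>j\<in>UNIV. w j * \<bar>(A $ j) \<bullet> (axis undefined 1 :: real^'r)\<bar> ^ 3)"
    using assms by (intro sum_nonneg) auto
  also have "\<dots> \<le> gamma1 w A" by (rule gamma_upper[OF assms]) (simp add: norm_axis_1)
  finally show ?thesis .
qed

lemma gamma_hom:
  fixes w :: "'p::finite \<Rightarrow> real"
  assumes "\<And>j. w j \<ge> 0"
  shows "(\<Sum>j\<in>UNIV. w j * \<bar>(A $ j) \<bullet> d\<bar> ^ 3) \<le> gamma1 w A * norm (d::real^'r::finite) ^ 3"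
proof (cases "d = 0")
  case True
  have "0 \<le> gamma1 w A"
proof -
  have "0 \<le> (\<Sum>j\<in>UNIV. w j * \<bar>(A $ j) \<bullet> (axis undefined 1 :: real^'r)\<bar> ^ 3)"
    using assms by (intro sum_nonneg) auto
  also have "\<dots> \<le> gamma1 w A" by (rule gamma_upper[OF assms]) (simp add: norm_axis_1)
  finally show ?thesis .
qed
  then show ?thesis using True by simp
next
  case False
  let ?u = "(1 / norm d) *\<^sub>R d"
  have "(\<Sum>j\<in>UNIV. w j * \<bar>(A $ j) \<bullet> ?u\<bar> ^ 3) \<le> gamma1 w A"
    using gamma_upper[where u="?u" and A=A, OF assms] False by simp
  moreover have "(\<Sum>j\<in>UNIV. w j * \<bar>(A $ j) \<bullet> ?u\<bar> ^ 3) = (\<Sum>j\<in>UNIV. w j * \<bar>(A $ j) \<bullet> d\<bar> ^ 3) / norm d ^ 3"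
    by (simp add: sum_divide_distrib abs_mult power_mult_distrib power_divide)
  ultimately have "(\<Sum>j\<in>UNIV. w j * \<bar>(A $ j) \<bullet> d\<bar> ^ 3) / norm d ^ 3 \<le> gamma1 w A" by simp
  then show ?thesis using False by (simp add: pos_divide_le_eq)
qed

lemma amgm3: fixes a b :: real assumes "a \<ge> 0" "b \<ge> 0" shows "3 * (a\<^sup>2 * b) \<le> 2 * a ^ 3 + b ^ 3"
proof -
  have "2 * a ^ 3 + b ^ 3 - 3 * (a\<^sup>2 * b) = (a - b)\<^sup>2 * (2 * a + b)" by (simp add: algebra_simps power2_eq_square power3_eq_cube)
  moreover have "(a - b)\<^sup>2 * (2 * a + b) \<ge> 0" using assms by simp
  ultimately show ?thesis by linarith
qed

theorem mainTheorem9: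
  fixes \<phi> C1 C2 \<xi> :: real
    and b b1 b2 b3 :: "real \<Rightarrow> real"
    and y \<omega> :: "'n::finite \<Rightarrow> 'p::finite \<Rightarrow> real"
    and Thetastar :: "real^'r::finite^'n"
    and Astar A :: "real^'r^'p"
    and i :: 'n
  defines "mstar \<equiv> \<lambda>i' j. (Thetastar $ i') \<bullet> (Astar $ j)"
  defines "z \<equiv> \<lambda>i' j. y i' j - b1 (mstar i' j)"
  assumes phi_pos: "\<phi> > 0"
    and b_d1: "\<And>x. (b has_real_derivative b1 x) (at x)"
    and b_d2: "\<And>x. (b1 has_real_derivative b2 x) (at x)"
    and b_d3: "\<And>x. (b2 has_real_derivative b3 x) (at x)"
    and b3_cont: "continuous_on UNIV b3"
    and b2_pos: "\<And>x. b2 x > 0"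
    and omega01: "\<And>i' j. \<omega> i' j \<in> {0, 1}"
    and Theta_bd: "two_to_inf_norm Thetastar \<le> C1"
    and Astar_bd: "two_to_inf_norm Astar \<le> C2"
    and A_bd: "two_to_inf_norm A \<le> C2"
    and sigma_pos: "sigma_min (I1 b2 (\<omega> i) (mstar i) A) > 0"
    and xi_pos: "\<xi> > 0"
    and lower: "2 / sigma_min (I1 b2 (\<omega> i) (mstar i) A) *
        (norm (\<Sum>j\<in>UNIV. (z i j * \<omega> i j) *\<^sub>R (A $ j))
         + norm (B1 b2 (\<omega> i) (mstar i) (Thetastar $ i) Astar A)
         + beta1 (\<omega> i) (Thetastar $ i) Astar A * kappa3 b3 (C2 * (C1 + \<xi>))) \<le> \<xi>"
    and upper: "gamma1 (\<omega> i) A * kappa3 b3 (C2 * (C1 + \<xi>)) = 0 \<or>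
        \<xi> \<le> sigma_min (I1 b2 (\<omega> i) (mstar i) A) /
              (2 * gamma1 (\<omega> i) A * kappa3 b3 (C2 * (C1 + \<xi>)))"
  shows "\<exists>\<theta>::real^'r. norm (\<theta> - Thetastar $ i) \<le> \<xi> \<and>
           S1 \<phi> b1 (y i) (\<omega> i) \<theta> A = 0"
proof -
  define M where "M = I1 b2 (\<omega> i) (mstar i) A"
  define s where "s = sigma_min M"
  define ths where "ths = Thetastar $ i"
  define \<alpha> where "\<alpha> = C2 * (C1 + \<xi>)"
  define \<kappa> where "\<kappa> = kappa3 b3 \<alpha>"
  define \<beta> where "\<beta> = beta1 (\<omega> i) ths Astar A"
  define \<gamma> where "\<gamma> = gamma1 (\<omega> i) A"
  define Zv where "Zv = (\<Sum>j\<in>UNIV. (z i j * \<omega> i j) *\<^sub>R (A $ j))"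
  define Bv where "Bv = B1 b2 (\<omega> i) (mstar i) ths Astar A"
  define V where "V = (\<lambda>\<theta>::real^'r. \<Sum>j\<in>UNIV. (\<omega> i j * (y i j - b1 ((A $ j) \<bullet> \<theta>))) *\<^sub>R (A $ j))"
  define e where "e = (\<lambda>j. (A $ j - Astar $ j) \<bullet> ths)"
  define R where "R = (\<lambda>j (\<theta>::real^'r). b1 ((A $ j) \<bullet> \<theta>) - b1 (mstar i j) - b2 (mstar i j) * ((A $ j) \<bullet> \<theta> - mstar i j))"
  define Rv where "Rv = (\<lambda>\<theta>. \<Sum>j\<in>UNIV. (\<omega> i j * R j \<theta>) *\<^sub>R (A $ j))"
  have s_pos: "s > 0" using sigma_pos by (simp add: s_def M_def)
  have w0: "\<And>j. \<omega> i j \<ge> 0" using omega01 by (metis insert_iff empty_iff order_refl zero_le_one)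
  have C1_nn: "C1 \<ge> 0" using Theta_bd row_le[of Thetastar i] by (metis norm_ge_zero order_trans)
  have C2_nn: "C2 \<ge> 0" using A_bd row_le[of A undefined] by (metis norm_ge_zero order_trans)
  have alpha_nn: "\<alpha> \<ge> 0" using C1_nn C2_nn xi_pos by (simp add: \<alpha>_def)
  have kappa_nn: "\<kappa> \<ge> 0"
    using kappa_bound[OF b3_cont, of 0 \<alpha>] alpha_nn by (simp add: \<kappa>_def)
  have gamma_nn: "\<gamma> \<ge> 0"
    using gamma_nonneg[where A=A, OF w0] by (simp add: \<gamma>_def)
  have sb: "\<And>v. s * norm v \<le> norm (M *v v)" unfolding s_def by (rule sigma_bound)
  have "inj ((*v) M)"
  proof (rule injI)
    fix v w assume "M *v v = M *v w"
    then have "M *v (v - w) = 0" by (simp add: matrix_vector_mult_diff_distrib)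
    then have "s * norm (v - w) \<le> 0" using sb[of "v - w"] by simp
    then show "v = w" using s_pos by (simp add: mult_le_0_iff)
  qed
  then obtain Binv where Bl: "Binv ** M = mat 1" using matrix_left_invertible_injective by blast
  then have Br: "M ** Binv = mat 1" using matrix_left_right_inverse by blast
  have Binv_bd: "\<And>w. norm (Binv *v w) \<le> norm w / s"
  proof -
    fix w
    have "s * norm (Binv *v w) \<le> norm (M *v (Binv *v w))" by (rule sb)
    also have "\<dots> = norm w" by (simp add: matrix_vector_mul_assoc Br)
    finally show "norm (Binv *v w) \<le> norm w / s" using s_pos by (simp add: field_simps)
  qed
  define T where "T = (\<lambda>\<theta>. \<theta> + Binv *v V \<theta>)"
  have key: "V \<theta> = Zv - Bv - M *v (\<theta> - ths) - Rv \<theta>" for \<theta>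
  proof -
    have "Zv - Bv - M *v (\<theta> - ths) - Rv \<theta> =
      (\<Sum>j\<in>UNIV. (z i j * \<omega> i j - \<omega> i j * b2 (mstar i j) * e j
          - \<omega> i j * b2 (mstar i j) * ((A $ j) \<bullet> (\<theta> - ths)) - \<omega> i j * R j \<theta>) *\<^sub>R (A $ j))"
      unfolding Zv_def Bv_def Rv_def M_def I1_mult B1_def e_def
      by (simp add: scaleR_diff_left sum_subtractf)
    also have "\<dots> = V \<theta>" unfolding V_def
    proof (rule sum.cong[OF refl])
      fix j
      have "z i j * \<omega> i j - \<omega> i j * b2 (mstar i j) * e j
          - \<omega> i j * b2 (mstar i j) * ((A $ j) \<bullet> (\<theta> - ths)) - \<omega> i j * R j \<theta>
          = \<omega> i j * (y i j - b1 ((A $ j) \<bullet> \<theta>))"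
        unfolding z_def R_def e_def mstar_def ths_def
        by (simp add: inner_diff_left inner_diff_right inner_commute algebra_simps)
      then show "(z i j * \<omega> i j - \<omega> i j * b2 (mstar i j) * e j
          - \<omega> i j * b2 (mstar i j) * ((A $ j) \<bullet> (\<theta> - ths)) - \<omega> i j * R j \<theta>) *\<^sub>R (A $ j)
          = (\<omega> i j * (y i j - b1 ((A $ j) \<bullet> \<theta>))) *\<^sub>R (A $ j)" by simp
    qed
    finally show ?thesis by simp
  qed
  have Tdiff: "T \<theta> - ths = Binv *v (Zv - Bv - Rv \<theta>)" for \<theta>
  proof -
    have "Binv *v (M *v (\<theta> - ths)) = \<theta> - ths" by (simp add: matrix_vector_mul_assoc Bl)
    then show ?thesis unfolding T_def key by (simp add: matrix_vector_mult_diff_distrib algebra_simps)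
  qed
  have Rbd: "norm (Rv \<theta>) \<le> \<kappa> * (\<beta> + \<gamma> * \<xi>\<^sup>2)" if th: "norm (\<theta> - ths) \<le> \<xi>" for \<theta>
  proof -
    define d where "d = \<theta> - ths"
    have dn: "norm d \<le> \<xi>" using th by (simp add: d_def)
    obtain u :: "real^'r" where u1: "norm u = 1" and un: "norm (Rv \<theta>) = Rv \<theta> \<bullet> u"
    proof (cases "Rv \<theta> = 0")
      case True then show ?thesis using that[of "axis undefined 1"] by (simp add: norm_axis_1)
    next
      case False then show ?thesis using that[of "(1 / norm (Rv \<theta>)) *\<^sub>R Rv \<theta>"]
        by (simp add: power2_norm_eq_inner[symmetric] power2_eq_square)
    qed
    have Rj: "\<bar>R j \<theta>\<bar> \<le> \<kappa> / 2 * (e j + (A $ j) \<bullet> d)\<^sup>2" for j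
    proof -
      have mj: "\<bar>mstar i j\<bar> \<le> \<alpha>"
      proof -
        have "\<bar>mstar i j\<bar> \<le> norm ths * norm (Astar $ j)"
          unfolding mstar_def ths_def by (rule Cauchy_Schwarz_ineq2)
        also have "\<dots> \<le> C1 * C2"
          using row_le[of Thetastar i] row_le[of Astar j] Theta_bd Astar_bd C1_nn
          by (intro mult_mono) (auto simp: ths_def)
        also have "\<dots> \<le> \<alpha>" using C2_nn xi_pos by (simp add: \<alpha>_def algebra_simps)
        finally show ?thesis .
      qed
      have tj: "\<bar>(A $ j) \<bullet> \<theta>\<bar> \<le> \<alpha>"
      proof -
        have "\<bar>(A $ j) \<bullet> \<theta>\<bar> \<le> norm (A $ j) * norm \<theta>" by (rule Cauchy_Schwarz_ineq2)
        also have "norm \<theta> \<le> C1 + \<xi>"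
          using norm_triangle_ineq[of ths d] dn row_le[of Thetastar i] Theta_bd
          by (simp add: d_def ths_def)
        then have "norm (A $ j) * norm \<theta> \<le> C2 * (C1 + \<xi>)"
          using row_le[of A j] A_bd C2_nn by (intro mult_mono) auto
        finally show ?thesis by (simp add: \<alpha>_def)
      qed
      have "\<bar>R j \<theta>\<bar> \<le> \<kappa> / 2 * ((A $ j) \<bullet> \<theta> - mstar i j)\<^sup>2"
        unfolding R_def \<kappa>_def
        by (rule taylor2[OF b_d2 b_d3], rule kappa_bound[OF b3_cont]) (use mj tj in auto)
      moreover have "(A $ j) \<bullet> \<theta> - mstar i j = e j + (A $ j) \<bullet> d"
        unfolding e_def d_def mstar_def ths_def
        by (simp add: inner_diff_left inner_diff_right inner_commute)
      ultimately show ?thesis by simp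
    qed
    have "norm (Rv \<theta>) = Rv \<theta> \<bullet> u" by (rule un)
    also have "\<dots> = (\<Sum>j\<in>UNIV. \<omega> i j * R j \<theta> * ((A $ j) \<bullet> u))"
      unfolding Rv_def by (simp add: inner_sum_left)
    also have "\<dots> \<le> (\<Sum>j\<in>UNIV. \<kappa> * (\<omega> i j * (e j)\<^sup>2 * \<bar>(A $ j) \<bullet> u\<bar>) + \<kappa> * (\<omega> i j * ((A $ j) \<bullet> d)\<^sup>2 * \<bar>(A $ j) \<bullet> u\<bar>))"
    proof (rule sum_mono)
      fix j
      have "R j \<theta> * ((A $ j) \<bullet> u) \<le> \<bar>R j \<theta>\<bar> * \<bar>(A $ j) \<bullet> u\<bar>" by (simp add: abs_mult[symmetric])
      also have "\<dots> \<le> \<kappa> / 2 * (e j + (A $ j) \<bullet> d)\<^sup>2 * \<bar>(A $ j) \<bullet> u\<bar>"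
        using Rj[of j] by (intro mult_right_mono) auto
      also have "\<dots> \<le> \<kappa> * ((e j)\<^sup>2 + ((A $ j) \<bullet> d)\<^sup>2) * \<bar>(A $ j) \<bullet> u\<bar>"
      proof (intro mult_right_mono)
        have sq: "(e j + (A $ j) \<bullet> d)\<^sup>2 \<le> 2 * ((e j)\<^sup>2 + ((A $ j) \<bullet> d)\<^sup>2)"
        proof -
          have h: "0 \<le> (e j - (A $ j) \<bullet> d)\<^sup>2" by simp
          have "2 * ((e j)\<^sup>2 + ((A $ j) \<bullet> d)\<^sup>2) - (e j + (A $ j) \<bullet> d)\<^sup>2 = (e j - (A $ j) \<bullet> d)\<^sup>2"
            by (simp add: power2_eq_square algebra_simps)
          then show ?thesis using h by linarith
        qed
        show "\<kappa> / 2 * (e j + (A $ j) \<bullet> d)\<^sup>2 \<le> \<kappa> * ((e j)\<^sup>2 + ((A $ j) \<bullet> d)\<^sup>2)"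
          using mult_left_mono[OF sq, of "\<kappa> / 2"] kappa_nn by (simp add: algebra_simps)
      qed auto
      finally have "R j \<theta> * ((A $ j) \<bullet> u) \<le> \<kappa> * ((e j)\<^sup>2 + ((A $ j) \<bullet> d)\<^sup>2) * \<bar>(A $ j) \<bullet> u\<bar>" .
      then have "\<omega> i j * (R j \<theta> * ((A $ j) \<bullet> u)) \<le> \<omega> i j * (\<kappa> * ((e j)\<^sup>2 + ((A $ j) \<bullet> d)\<^sup>2) * \<bar>(A $ j) \<bullet> u\<bar>)"
        using w0[of j] by (rule mult_left_mono)
      then show "\<omega> i j * R j \<theta> * ((A $ j) \<bullet> u) \<le> \<kappa> * (\<omega> i j * (e j)\<^sup>2 * \<bar>(A $ j) \<bullet> u\<bar>) + \<kappa> * (\<omega> i j * ((A $ j) \<bullet> d)\<^sup>2 * \<bar>(A $ j) \<bullet> u\<bar>)"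
        by (simp add: algebra_simps)
    qed
    also have "\<dots> = \<kappa> * (\<Sum>j\<in>UNIV. \<omega> i j * (e j)\<^sup>2 * \<bar>(A $ j) \<bullet> u\<bar>) + \<kappa> * (\<Sum>j\<in>UNIV. \<omega> i j * ((A $ j) \<bullet> d)\<^sup>2 * \<bar>(A $ j) \<bullet> u\<bar>)"
      by (simp add: sum.distrib sum_distrib_left)
    also have "\<dots> \<le> \<kappa> * \<beta> + \<kappa> * (\<gamma> * \<xi>\<^sup>2)"
    proof (intro add_mono mult_left_mono kappa_nn)
      show "(\<Sum>j\<in>UNIV. \<omega> i j * (e j)\<^sup>2 * \<bar>(A $ j) \<bullet> u\<bar>) \<le> \<beta>"
        unfolding \<beta>_def e_def by (rule beta_upper[OF w0 u1])
      have "3 * \<xi> * (\<Sum>j\<in>UNIV. \<omega> i j * ((A $ j) \<bullet> d)\<^sup>2 * \<bar>(A $ j) \<bullet> u\<bar>)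
          = (\<Sum>j\<in>UNIV. \<omega> i j * (3 * (\<bar>(A $ j) \<bullet> d\<bar>\<^sup>2 * (\<xi> * \<bar>(A $ j) \<bullet> u\<bar>))))"
        by (simp add: sum_distrib_left algebra_simps)
      also have "\<dots> \<le> (\<Sum>j\<in>UNIV. \<omega> i j * (2 * \<bar>(A $ j) \<bullet> d\<bar> ^ 3 + (\<xi> * \<bar>(A $ j) \<bullet> u\<bar>) ^ 3))"
        using w0 xi_pos by (intro sum_mono mult_left_mono amgm3) auto
      also have "\<dots> = 2 * (\<Sum>j\<in>UNIV. \<omega> i j * \<bar>(A $ j) \<bullet> d\<bar> ^ 3) + \<xi> ^ 3 * (\<Sum>j\<in>UNIV. \<omega> i j * \<bar>(A $ j) \<bullet> u\<bar> ^ 3)"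
        by (simp add: sum.distrib sum_distrib_left algebra_simps power_mult_distrib)
      also have "\<dots> \<le> 2 * (\<gamma> * \<xi> ^ 3) + \<xi> ^ 3 * \<gamma>"
      proof (intro add_mono mult_left_mono)
        have "(\<Sum>j\<in>UNIV. \<omega> i j * \<bar>(A $ j) \<bullet> d\<bar> ^ 3) \<le> \<gamma> * norm d ^ 3"
          unfolding \<gamma>_def by (rule gamma_hom[OF w0])
        also have "\<dots> \<le> \<gamma> * \<xi> ^ 3" using dn gamma_nn by (intro mult_left_mono power_mono) auto
        finally show "(\<Sum>j\<in>UNIV. \<omega> i j * \<bar>(A $ j) \<bullet> d\<bar> ^ 3) \<le> \<gamma> * \<xi> ^ 3" .
        show "(\<Sum>j\<in>UNIV. \<omega> i j * \<bar>(A $ j) \<bullet> u\<bar> ^ 3) \<le> \<gamma>"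
          unfolding \<gamma>_def by (rule gamma_upper[OF w0 u1])
      qed (use xi_pos in auto)
      also have "\<dots> = 3 * \<xi> * (\<gamma> * \<xi>\<^sup>2)" by (simp add: power2_eq_square power3_eq_cube)
      finally show "(\<Sum>j\<in>UNIV. \<omega> i j * ((A $ j) \<bullet> d)\<^sup>2 * \<bar>(A $ j) \<bullet> u\<bar>) \<le> \<gamma> * \<xi>\<^sup>2"
        using xi_pos by simp
    qed
    finally show ?thesis by (simp add: algebra_simps)
  qed
  have low: "norm Zv + norm Bv + \<beta> * \<kappa> \<le> s * \<xi> / 2"
    using lower s_pos unfolding Zv_def Bv_def \<beta>_def \<kappa>_def \<alpha>_def s_def M_def ths_def
    by (simp add: field_simps)
  have up: "\<kappa> * (\<gamma> * \<xi>\<^sup>2) \<le> s * \<xi> / 2"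
  proof (cases "\<gamma> * \<kappa> > 0")
    case True
    then have "\<xi> \<le> s / (2 * \<gamma> * \<kappa>)"
      using upper unfolding \<gamma>_def \<kappa>_def \<alpha>_def s_def M_def by auto
    then have "\<xi> * (2 * \<gamma> * \<kappa>) \<le> s" using True by (simp add: field_simps)
    then have "\<xi> * (\<xi> * (2 * \<gamma> * \<kappa>)) \<le> \<xi> * s" using xi_pos by (intro mult_left_mono) auto
    then show ?thesis by (simp add: power2_eq_square algebra_simps)
  next
    case False
    have "\<gamma> * \<kappa> * \<xi>\<^sup>2 \<le> 0" by (rule mult_nonpos_nonneg) (use False in auto)
    then have "\<kappa> * (\<gamma> * \<xi>\<^sup>2) \<le> 0" by (simp add: mult_ac)
    moreover have "0 < s * \<xi>" using s_pos xi_pos by simp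
    ultimately show ?thesis by linarith
  qed
  have maps: "T \<theta> \<in> cball ths \<xi>" if "\<theta> \<in> cball ths \<xi>" for \<theta>
  proof -
    have th: "norm (\<theta> - ths) \<le> \<xi>" using that by (simp add: dist_norm norm_minus_commute)
    have "norm (T \<theta> - ths) \<le> norm (Zv - Bv - Rv \<theta>) / s" unfolding Tdiff by (rule Binv_bd)
    also have "\<dots> \<le> (norm Zv + norm Bv + norm (Rv \<theta>)) / s"
    proof (rule divide_right_mono)
      have "norm (Zv - Bv - Rv \<theta>) \<le> norm (Zv - Bv) + norm (Rv \<theta>)" by (rule norm_triangle_ineq4)
      moreover have "norm (Zv - Bv) \<le> norm Zv + norm Bv" by (rule norm_triangle_ineq4)
      ultimately show "norm (Zv - Bv - Rv \<theta>) \<le> norm Zv + norm Bv + norm (Rv \<theta>)" by linarith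
    qed (use s_pos in auto)
    also have "\<dots> \<le> (s * \<xi> / 2 + s * \<xi> / 2) / s"
      using Rbd[OF th] low up s_pos by (intro divide_right_mono) (auto simp: algebra_simps)
    also have "\<dots> = \<xi>" using s_pos by simp
    finally show ?thesis by (simp add: dist_norm norm_minus_commute)
  qed
  have b1c: "continuous_on UNIV b1"
    using b_d2 by (intro continuous_at_imp_continuous_on) (auto intro: DERIV_isCont)
  have cV: "continuous_on UNIV V"
    unfolding V_def by (intro continuous_intros continuous_on_compose2[OF b1c]) auto
  have cBV: "continuous_on UNIV (\<lambda>\<theta>. Binv *v V \<theta>)"
    by (rule continuous_on_compose2[OF matrix_vector_mult_linear_continuous_on cV]) auto
  have "continuous_on UNIV T"
    unfolding T_def by (intro continuous_on_add continuous_on_id cBV)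
  then have contT: "continuous_on (cball ths \<xi>) T" by (rule continuous_on_subset) auto
  obtain x where "x \<in> cball ths \<xi>" "T x = x"
    using brouwer[of "cball ths \<xi>" T] contT maps xi_pos by auto
  then have "Binv *v V x = 0" by (simp add: T_def)
  then have "M *v (Binv *v V x) = 0" by simp
  then have "V x = 0" by (simp add: matrix_vector_mul_assoc Br)
  then have "S1 \<phi> b1 (y i) (\<omega> i) x A = 0" unfolding S1_def V_def by simp
  moreover have "norm (x - Thetastar $ i) \<le> \<xi>"
    using \<open>x \<in> cball ths \<xi>\<close> by (simp add: ths_def dist_norm norm_minus_commute)
  ultimately show ?thesis by blast
qed

end
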